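(* Let $k=2r$ with $r\ge1$, $G=BS(1,k)$, and $m>0$. Let $\mathcal{A}_m$ be the set of words $a^{x_0}ta^{x_1}t\cdots a^{x_{m-1}}t$ ($x_i\in\mathbb{Z}$) satisfying: (1) $|x_i|\le r$ for all $i$; (2) for each $i$, if $x_{i-1}=r$ then $0\le x_i<r$, and if $x_{i-1}=-r$ then $-r<x_i\le0$ (with the convention $x_{-1}=x_{m-1}$); (3) if $m$ is even, the words $(a^{-(r-1)}ta^{-r}t)^{m/2}$ and $(a^{-r}ta^{-(r-1)}t)^{m/2}$ are excluded. Then two words in $\mathcal{A}_m$ represent conjugate elements of $G$ if and only if they are cyclic permutations of each other, and every word in $\mathcal{A}_m$ is a conjugacy geodesic.
   Context: $BS(1,k)=\langle a,t\mid tat^{-1}=a^k\rangle$. $a^x$ denotes $|x|$ copies of $a$ or $a^{-1}$ according to the sign of $x$. Word length is with respect to $\{a,t\}$. A word is a conjugacy geodesic if it is a geodesic word and the element it represents has minimal length among all elements of its conjugacy class. *)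

theory Defs
  imports Main
begin

text \<open>Words over the generators a, t of BS(1,k) and their inverses.
  A letter is a generator together with a sign (True = positive exponent).\<close>

datatype gen = GA | GT

type_synonym letter = "gen \<times> bool"
type_synonym word = "letter list"

definition inv_letter :: "letter \<Rightarrow> letter" where
  "inv_letter l = (fst l, \<not> snd l)"

definition inv_word :: "word \<Rightarrow> word" where
  "inv_word w = rev (map inv_letter w)"

text \<open>Equality in BS(1,k) = < a, t | t a t^-1 = a^k >: the congruence on words
  generated by free cancellation and the defining relator.\<close>

inductive bs_eq :: "nat \<Rightarrow> word \<Rightarrow> word \<Rightarrow> bool" for k :: nat where
  bs_refl: "bs_eq k w w"
| bs_sym: "bs_eq k u v \<Longrightarrow> bs_eq k v u"
| bs_trans: "bs_eq k u v \<Longrightarrow> bs_eq k v w \<Longrightarrow> bs_eq k u w"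
| bs_ctxt: "bs_eq k u v \<Longrightarrow> bs_eq k (x @ u @ y) (x @ v @ y)"
| bs_free: "bs_eq k [l, inv_letter l] []"
| bs_rel: "bs_eq k [(GT, True), (GA, True), (GT, False)] (replicate k (GA, True))"

definition bs_length :: "nat \<Rightarrow> word \<Rightarrow> nat" where
  "bs_length k w = (LEAST n. \<exists>v. bs_eq k v w \<and> length v = n)"

definition bs_geodesic :: "nat \<Rightarrow> word \<Rightarrow> bool" where
  "bs_geodesic k w \<longleftrightarrow> length w = bs_length k w"

definition bs_conj :: "nat \<Rightarrow> word \<Rightarrow> word \<Rightarrow> bool" where
  "bs_conj k u v \<longleftrightarrow> (\<exists>g. bs_eq k (g @ u @ inv_word g) v)"

definition bs_conj_geodesic :: "nat \<Rightarrow> word \<Rightarrow> bool" where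
  "bs_conj_geodesic k w \<longleftrightarrow>
     bs_geodesic k w \<and> (\<forall>v. bs_conj k v w \<longrightarrow> bs_length k w \<le> bs_length k v)"

definition apow :: "int \<Rightarrow> word" where
  "apow x = (if x \<ge> 0 then replicate (nat x) (GA, True) else replicate (nat (- x)) (GA, False))"

definition tword :: "int list \<Rightarrow> word" where
  "tword xs = concat (map (\<lambda>x. apow x @ [(GT, True)]) xs)"

definition A_set :: "nat \<Rightarrow> nat \<Rightarrow> word set" where
  "A_set r m = {w. \<exists>xs. length xs = m \<and> w = tword xs
      \<and> (\<forall>i<m. \<bar>xs ! i\<bar> \<le> int r)
      \<and> (\<forall>i<m. (xs ! ((i + m - 1) mod m) = int r \<longrightarrow> 0 \<le> xs ! i \<and> xs ! i < int r)
              \<and> (xs ! ((i + m - 1) mod m) = - int r \<longrightarrow> - int r < xs ! i \<and> xs ! i \<le> 0))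
      \<and> (even m \<longrightarrow>
           w \<noteq> concat (replicate (m div 2) (tword [- (int r - 1), - int r]))
         \<and> w \<noteq> concat (replicate (m div 2) (tword [- int r, - (int r - 1)])))}"

end

theory Submission
  imports Defs Complex_Main "HOL-Number_Theory.Cong"
begin


fun evl :: "nat \<Rightarrow> letter \<Rightarrow> rat \<Rightarrow> rat" where
  "evl k (GA, b) z = (if b then z + 1 else z - 1)"
| "evl k (GT, b) z = (if b then of_nat k * z else z / of_nat k)"

fun ev :: "nat \<Rightarrow> word \<Rightarrow> rat \<Rightarrow> rat" where
  "ev k [] z = z"
| "ev k (l # w) z = evl k l (ev k w z)"

lemma ev_append: "ev k (u @ w) z = ev k u (ev k w z)"
  by (induction u) auto

lemma evl_inv: "k > 0 \<Longrightarrow> evl k l (evl k (inv_letter l) z) = z"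
  by (cases l; cases "fst l"; cases "snd l") (auto simp: inv_letter_def)

lemma ev_rep_a: "ev k (replicate n (GA, True)) z = z + of_nat n"
  by (induction n) auto

lemma bs_eq_ev: assumes "bs_eq k u v" "k > 0" shows "ev k u = ev k v"
  using assms
proof (induction rule: bs_eq.induct)
  case (bs_ctxt u v x y)
  then show ?case by (auto simp: ev_append fun_eq_iff)
next
  case (bs_free l)
  then show ?case using evl_inv[of k l] by (auto simp: fun_eq_iff)
next
  case bs_rel
  then show ?case by (auto simp: fun_eq_iff ev_rep_a field_simps)
qed auto

lemma ev_inv_word: "k > 0 \<Longrightarrow> ev k (inv_word g) (ev k g z) = z"
proof (induction g arbitrary: z)
  case (Cons l g)
  have "inv_letter (inv_letter l) = l" by (simp add: inv_letter_def)
  then show ?case using Cons evl_inv[of k "inv_letter l"]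
    by (simp add: inv_word_def ev_append)
qed (simp add: inv_word_def)

fun ts :: "word \<Rightarrow> int" where
  "ts [] = 0"
| "ts ((GA, b) # w) = ts w"
| "ts ((GT, b) # w) = (if b then 1 else -1) + ts w"

fun bt :: "nat \<Rightarrow> word \<Rightarrow> rat" where
  "bt k [] = 0"
| "bt k ((GA, b) # w) = bt k w + (if b then 1 else -1)"
| "bt k ((GT, b) # w) = (if b then of_nat k * bt k w else bt k w / of_nat k)"

lemma ev_affine: "k > 0 \<Longrightarrow> ev k w z = (of_nat k :: rat) powi ts w * z + bt k w"
proof (induction w)
  case (Cons l w)
  obtain g b where l: "l = (g, b)" by force
  show ?case
  proof (cases g)
    case GA then show ?thesis using Cons l by auto
  next
    case GT
    have nz: "(of_nat k :: rat) \<noteq> 0" using Cons by simp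
    show ?thesis
    proof (cases b)
      case True
      have "(of_nat k :: rat) powi (1 + ts w) = of_nat k * of_nat k powi ts w"
        using power_int_add_1'[of "of_nat k :: rat" "ts w"] nz by (simp add: add.commute)
      then show ?thesis using Cons l GT nz True
        by (simp add: algebra_simps)
    next
      case False
      have "(of_nat k :: rat) powi (-1 + ts w) = of_nat k powi ts w / of_nat k"
        using power_int_diff[of "of_nat k :: rat" "ts w" 1] nz by simp
      then show ?thesis using Cons l GT nz False
        by (simp add: field_simps)
    qed
  qed
qed simp

definition Vv :: "nat \<Rightarrow> int \<Rightarrow> (nat \<Rightarrow> int) \<Rightarrow> nat \<Rightarrow> int" where
  "Vv m k f j = (\<Sum>i<m. f ((i + j) mod m) * k ^ i)"

lemma Vv_key:
  assumes "m > 0"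
  shows "k * Vv m k f (Suc j) = Vv m k f j + f (j mod m) * (k ^ m - 1)"
proof -
  obtain n where n: "m = Suc n" using assms by (cases m) auto
  have "k * Vv m k f (Suc j) = (\<Sum>i<Suc n. f ((Suc i + j) mod m) * k ^ Suc i)"
    by (simp add: Vv_def n sum_distrib_left algebra_simps)
  also have "\<dots> = (\<Sum>i<n. f ((Suc i + j) mod m) * k ^ Suc i) + f ((Suc n + j) mod m) * k ^ Suc n"
    by simp
  also have "(Suc n + j) mod m = j mod m" by (metis n add.commute mod_add_self2)
  finally have A: "k * Vv m k f (Suc j) = (\<Sum>i<n. f ((Suc i + j) mod m) * k ^ Suc i) + f (j mod m) * k ^ m"
    by (simp add: n)
  have B: "Vv m k f j = f (j mod m) + (\<Sum>i<n. f ((Suc i + j) mod m) * k ^ Suc i)"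
    unfolding Vv_def n by (subst sum.lessThan_Suc_shift) simp
  show ?thesis using A B by (simp add: algebra_simps)
qed

lemma Vv_shift: "Vv m k (\<lambda>i. f ((i + c) mod m)) j = Vv m k f (j + c)"
  by (simp add: Vv_def mod_add_left_eq add.assoc)

lemma Vv_periodic: "Vv m k f (j + m) = Vv m k f j"
  by (simp add: Vv_def add.assoc[symmetric])

lemma Vv_periodic': "Vv m k f (j mod m) = Vv m k f j"
  by (simp add: Vv_def mod_add_right_eq)

lemma Vv_diff: "Vv m k (\<lambda>i. f i - g i) j = Vv m k f j - Vv m k g j"
  by (simp add: Vv_def sum_subtractf algebra_simps)

lemma Vv_rot:
  assumes "m > 0"
  shows "[k ^ j * Vv m k f j = Vv m k f 0] (mod k ^ m - 1)"
proof (induction j)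
  case (Suc j)
  have "k ^ Suc j * Vv m k f (Suc j) = k ^ j * (k * Vv m k f (Suc j))"
    by (simp add: algebra_simps)
  also have "\<dots> = k ^ j * (Vv m k f j + f (j mod m) * (k ^ m - 1))"
    using Vv_key[OF assms, of k f j] by simp
  finally have "k ^ Suc j * Vv m k f (Suc j) = k ^ j * (Vv m k f j + f (j mod m) * (k ^ m - 1))" .
  also have "\<dots> = k ^ j * Vv m k f j + (k ^ j * f (j mod m)) * (k ^ m - 1)"
    by (simp add: algebra_simps)
  finally have "[k ^ Suc j * Vv m k f (Suc j) = k ^ j * Vv m k f j] (mod k ^ m - 1)"
    by (simp add: cong_iff_dvd_diff)
  then show ?case using Suc cong_trans by blast
qed simp

lemma pow_m_cong: "[(k::int) ^ (m * n) = 1] (mod k ^ m - 1)"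
proof -
  have "[k ^ m = 1] (mod k ^ m - 1)" by (simp add: cong_iff_dvd_diff)
  then have "[(k ^ m) ^ n = 1 ^ n] (mod k ^ m - 1)" by (rule cong_pow)
  then show ?thesis by (simp add: power_mult)
qed

lemma Vv_pow_shift:
  assumes "m > 0"
  shows "[k ^ n * Vv m k f 0 = Vv m k f ((m - 1) * n)] (mod k ^ m - 1)"
proof -
  have "[k ^ n * (k ^ ((m - 1) * n) * Vv m k f ((m - 1) * n)) = k ^ n * Vv m k f 0] (mod k ^ m - 1)"
    using Vv_rot[OF assms] by (rule cong_scalar_left)
  moreover have "k ^ n * (k ^ ((m - 1) * n) * Vv m k f ((m - 1) * n)) = k ^ (m * n) * Vv m k f ((m - 1) * n)"
  proof -
    have "n + (m - 1) * n = m * n" using assms by (cases m) auto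
    then show ?thesis by (simp add: power_add[symmetric] mult.assoc[symmetric])
  qed
  moreover have "[k ^ (m * n) * Vv m k f ((m - 1) * n) = 1 * Vv m k f ((m - 1) * n)] (mod k ^ m - 1)"
    using pow_m_cong by (rule cong_scalar_right)
  ultimately show ?thesis by (metis cong_sym cong_trans mult_1)
qed

lemma coprime_k_km1:
  assumes "m > 0"
  shows "coprime ((k::int) ^ j) (k ^ m - 1)"
proof -
  have "coprime k (k ^ m - 1)"
  proof (rule coprimeI)
    fix c assume c1: "c dvd k" and c2: "c dvd k ^ m - 1"
    have "c dvd k ^ m" using c1 assms by (meson dvd_power dvd_trans)
    then have "c dvd k ^ m - (k ^ m - 1)" using c2 by (rule dvd_diff)
    then show "is_unit c" by simp
  qed
  then show ?thesis by simp
qed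

lemma cong_cancel_pow:
  assumes "m > 0" "[k ^ j * a = k ^ j * b] (mod (k::int) ^ m - 1)"
  shows "[a = b] (mod k ^ m - 1)"
proof -
  have "(k ^ m - 1) dvd k ^ j * (a - b)" using assms(2) by (simp add: cong_iff_dvd_diff algebra_simps)
  then have "(k ^ m - 1) dvd (a - b)"
    using coprime_k_km1[OF assms(1), of k j] by (metis coprime_commute coprime_dvd_mult_right_iff)
  then show ?thesis by (simp add: cong_iff_dvd_diff)
qed

definition zk :: "nat \<Rightarrow> rat \<Rightarrow> bool" where
  "zk k q \<longleftrightarrow> (\<exists>(C::int) (p::nat). q * of_nat k ^ p = of_int C)"

definition rcong :: "nat \<Rightarrow> nat \<Rightarrow> rat \<Rightarrow> rat \<Rightarrow> bool" where
  "rcong k m q1 q2 \<longleftrightarrow> (\<exists>(C::int) (p::nat). (q1 - q2) * of_nat k ^ p = of_int C * (of_nat k ^ m - 1))"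

lemma zk_int: "zk k (of_int C)"
  unfolding zk_def by (rule exI[of _ C], rule exI[of _ 0]) simp

lemma zk_add: assumes "zk k a" "zk k b" shows "zk k (a + b)"
proof -
  obtain C p D q where "a * of_nat k ^ p = of_int C" "b * of_nat k ^ q = of_int D"
    using assms unfolding zk_def by blast
  moreover have "(a + b) * of_nat k ^ (p + q) = (a * of_nat k ^ p) * of_nat k ^ q + (b * of_nat k ^ q) * of_nat k ^ p"
    by (simp add: power_add algebra_simps)
  ultimately have "(a + b) * of_nat k ^ (p + q) = of_int (C * int k ^ q + D * int k ^ p)"
    by simp
  then show ?thesis unfolding zk_def by blast
qed

lemma zk_uminus: assumes "zk k a" shows "zk k (- a)"
proof -
  obtain C p where "a * of_nat k ^ p = of_int C" using assms unfolding zk_def by blast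
  then have "(- a) * of_nat k ^ p = of_int (- C)" by simp
  then show ?thesis unfolding zk_def by blast
qed

lemma zk_multk: assumes "zk k a" shows "zk k (of_nat k ^ n * a)"
proof -
  obtain C p where "a * of_nat k ^ p = of_int C" using assms unfolding zk_def by blast
  then have "(of_nat k ^ n * a) * of_nat k ^ p = of_int (int k ^ n * C)" by (simp add: algebra_simps)
  then show ?thesis unfolding zk_def by blast
qed

lemma zk_divk: assumes "zk k a" "k > 0" shows "zk k (a / of_nat k)"
proof -
  obtain C p where "a * of_nat k ^ p = of_int C" using assms unfolding zk_def by blast
  then have "(a / of_nat k) * of_nat k ^ (Suc p) = of_int C" using assms(2) by (simp add: algebra_simps)
  then show ?thesis unfolding zk_def by blast
qed

lemma zk_bt_cons: assumes "zk k (bt k w)" "k > 0" shows "zk k (bt k (l # w))"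
proof -
  obtain g b where l: "l = (g, b)" by force
  have a: "zk k (of_nat k ^ 1 * bt k w)" by (rule zk_multk[OF assms(1)])
  have c: "zk k (bt k w / of_nat k)" by (rule zk_divk[OF assms])
  have d: "zk k (bt k w + of_int (if b then 1 else -1))" by (rule zk_add[OF assms(1) zk_int])
  show ?thesis
  proof (cases g)
    case GA then show ?thesis using d l by (cases b) simp_all
  next
    case GT then show ?thesis using a c l by (cases b) simp_all
  qed
qed

lemma zk_bt: "k > 0 \<Longrightarrow> zk k (bt k w)"
  by (induction w) (simp_all add: zk_bt_cons zk_int[of k 0, simplified])

lemma rcong_refl: "rcong k m q q"
  unfolding rcong_def by (rule exI[of _ 0], rule exI[of _ 0]) simp

lemma rcong_sym: "rcong k m a b \<Longrightarrow> rcong k m b a"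
  unfolding rcong_def
proof (elim exE)
  fix C p assume "(a - b) * of_nat k ^ p = of_int C * (of_nat k ^ m - 1)"
  then have "(b - a) * of_nat k ^ p = of_int (- C) * (of_nat k ^ m - 1)" by (simp add: algebra_simps)
  then show "\<exists>C p. (b - a) * of_nat k ^ p = of_int C * (of_nat k ^ m - (1::rat))" by blast
qed

lemma rcong_trans: assumes "rcong k m a b" "rcong k m b c" shows "rcong k m a c"
proof -
  obtain C p D q where 1: "(a - b) * of_nat k ^ p = of_int C * (of_nat k ^ m - (1::rat))"
    and 2: "(b - c) * of_nat k ^ q = of_int D * (of_nat k ^ m - (1::rat))"
    using assms unfolding rcong_def by blast
  have "(a - c) * of_nat k ^ (p + q) = ((a - b) * of_nat k ^ p) * of_nat k ^ q + ((b - c) * of_nat k ^ q) * of_nat k ^ p"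
    by (simp add: power_add algebra_simps)
  also have "\<dots> = of_int (C * int k ^ q + D * int k ^ p) * (of_nat k ^ m - 1)"
    unfolding 1 2 by (simp add: algebra_simps)
  finally show ?thesis unfolding rcong_def by blast
qed

lemma rcong_mult: assumes "rcong k m a b" shows "rcong k m (of_nat k ^ n * a) (of_nat k ^ n * b)"
proof -
  obtain C p where 1: "(a - b) * of_nat k ^ p = of_int C * (of_nat k ^ m - (1::rat))"
    using assms unfolding rcong_def by blast
  have "(of_nat k ^ n * a - of_nat k ^ n * b) * of_nat k ^ p = of_int (int k ^ n * C) * (of_nat k ^ m - (1::rat))"
    using arg_cong[OF 1, of "\<lambda>x. of_nat k ^ n * x"] by (simp add: algebra_simps)
  then show ?thesis unfolding rcong_def by blast
qed

lemma rcong_div: assumes "rcong k m a b" "k > 0" shows "rcong k m (a / of_nat k) (b / of_nat k)"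
proof -
  obtain C p where 1: "(a - b) * of_nat k ^ p = of_int C * (of_nat k ^ m - (1::rat))"
    using assms unfolding rcong_def by blast
  have "(a / of_nat k - b / of_nat k) * of_nat k ^ Suc p = (a - b) * of_nat k ^ p"
    using assms(2) by (simp add: field_simps)
  then have "(a / of_nat k - b / of_nat k) * of_nat k ^ Suc p = of_int C * (of_nat k ^ m - (1::rat))"
    using 1 by simp
  then show ?thesis unfolding rcong_def by blast
qed

lemma rcong_add: assumes "rcong k m a b" shows "rcong k m (a + c) (b + c)"
  using assms unfolding rcong_def by simp

lemma rcong_zk: assumes "zk k c" shows "rcong k m (a + c * (of_nat k ^ m - 1)) a"
proof -
  obtain C p where "c * of_nat k ^ p = of_int C" using assms unfolding zk_def by blast
  then have "(a + c * (of_nat k ^ m - 1) - a) * of_nat k ^ p = of_int C * (of_nat k ^ m - (1::rat))"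
    by (simp add: algebra_simps)
  then show ?thesis unfolding rcong_def by blast
qed

lemma int_rcong: assumes "[A = B] (mod int k ^ m - 1)" shows "rcong k m (of_int A) (of_int B)"
proof -
  obtain C where "A - B = (int k ^ m - 1) * C" using assms by (auto simp: cong_iff_dvd_diff dvd_def)
  then have "(of_int (A - B) :: rat) = of_int ((int k ^ m - 1) * C)" by simp
  then have "(of_int A - of_int B) * of_nat k ^ 0 = of_int C * (of_nat k ^ m - (1::rat))"
    by (simp add: algebra_simps)
  then show ?thesis unfolding rcong_def by blast
qed

lemma rcong_int: assumes "rcong k m (of_int A) (of_int B)" "m > 0"
  shows "[A = B] (mod int k ^ m - 1)"
proof -
  obtain C p where 1: "(of_int A - of_int B) * of_nat k ^ p = of_int C * (of_nat k ^ m - (1::rat))"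
    using assms unfolding rcong_def by blast
  have "of_int ((A - B) * int k ^ p) = (of_int (C * (int k ^ m - 1)) :: rat)"
    using 1 by simp
  then have "(A - B) * int k ^ p = C * (int k ^ m - 1)" by (simp only: of_int_eq_iff)
  then have "(int k ^ m - 1) dvd (int k ^ p * A - int k ^ p * B)"
    by (metis dvd_triv_right mult.commute right_diff_distrib)
  then have "[int k ^ p * A = int k ^ p * B] (mod int k ^ m - 1)"
    by (simp add: cong_iff_dvd_diff)
  then show ?thesis using cong_cancel_pow[OF assms(2)] by blast
qed

lemma rcong_neg_pow:
  assumes "zk k q" "k > 0" "m > 0"
  shows "rcong k m (q / of_nat k ^ n) (of_nat k ^ ((m - 1) * n) * q)"
  using assms(1)
proof (induction n arbitrary: q)
  case 0 then show ?case by (simp add: rcong_refl)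
next
  case (Suc n)
  define x where "x = of_nat k ^ ((m - 1) * n) * q"
  have zx: "zk k (x / of_nat k)" unfolding x_def using zk_divk[OF zk_multk[OF Suc(2)] assms(2)] by blast
  have 1: "rcong k m (q / of_nat k ^ Suc n) (x / of_nat k)"
  proof -
    have e: "q / of_nat k ^ Suc n = (q / of_nat k ^ n) / of_nat k"
      by (simp add: divide_divide_eq_left mult.commute)
    show ?thesis unfolding e x_def by (rule rcong_div[OF Suc(1)[OF Suc(2)] assms(2)])
  qed
  obtain m' where m': "m = Suc m'" using assms(3) by (cases m) auto
  have "x / of_nat k + x / of_nat k * (of_nat k ^ m - 1) = x / of_nat k * of_nat k ^ m"
    by (simp add: algebra_simps)
  also have "\<dots> = of_nat k ^ (m - 1) * x" using assms(2) unfolding m' by simp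
  finally have "x / of_nat k + x / of_nat k * (of_nat k ^ m - 1) = of_nat k ^ (m - 1) * x" .
  then have 2: "rcong k m (of_nat k ^ (m - 1) * x) (x / of_nat k)"
    using rcong_zk[OF zx, of m "x / of_nat k"] by simp
  have "of_nat k ^ (m - 1) * x = of_nat k ^ ((m - 1) * Suc n) * q"
  proof -
    have "(m - 1) * Suc n = (m - 1) + (m - 1) * n" by simp
    then show ?thesis unfolding x_def by (simp only: power_add mult.assoc)
  qed
  then show ?case using rcong_trans[OF 1 rcong_sym[OF 2]] by simp
qed

lemma rcong_powi:
  assumes "zk k q" "k > 0" "m > 0"
  shows "\<exists>n. rcong k m ((of_nat k :: rat) powi j * q) (of_nat k ^ n * q)"
proof (cases "j \<ge> 0")
  case True
  then have "(of_nat k :: rat) powi j * q = of_nat k ^ nat j * q" by (simp add: power_int_nonneg_exp)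
  then show ?thesis using rcong_refl by metis
next
  case False
  define n where "n = nat (- j)"
  have j: "j = - int n" using False unfolding n_def by simp
  have "(of_nat k :: rat) powi j * q = q / of_nat k ^ n" by (simp add: j power_int_minus field_simps)
  then show ?thesis using rcong_neg_pow[OF assms, of n] by metis
qed

lemma conj_affine:
  assumes k1: "k > 1" and m0: "m > 0" and tw: "ts w = int m"
    and cj: "\<forall>z. ev k w (ev k g z) = ev k g (ev k v z)"
  shows "ts v = int m \<and> (\<exists>n. rcong k m (bt k w) (of_nat k ^ n * bt k v))"
proof -
  have k0: "k > 0" using k1 by simp
  define K where "K = (of_nat k :: rat)"
  have K1: "K > 1" unfolding K_def using k1 by simp
  define s where "s = K powi ts g"
  have s0: "s \<noteq> 0" unfolding s_def using K1 by simp
  have Kw: "K powi ts w = K ^ m" unfolding tw by (simp add: power_int_def)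
  have E: "\<And>z. K ^ m * (s * z + bt k g) + bt k w = s * (K powi ts v * z + bt k v) + bt k g"
    using cj ev_affine[OF k0] Kw unfolding s_def K_def by metis
  have E0: "K ^ m * bt k g + bt k w = s * bt k v + bt k g" using E[of 0] by simp
  have E1: "K ^ m * (s + bt k g) + bt k w = s * (K powi ts v + bt k v) + bt k g" using E[of 1] by simp
  have E1': "K ^ m * s + (K ^ m * bt k g + bt k w) = s * K powi ts v + (s * bt k v + bt k g)"
    using E1 by (simp add: algebra_simps)
  have "K ^ m * s = s * K powi ts v" using E0 E1' by linarith
  then have "K powi ts v = K powi ts w" using s0 Kw by (simp add: mult.commute)
  then have tv: "ts v = ts w"
    using power_int_strict_increasing[OF _ K1, of "ts v" "ts w"] power_int_strict_increasing[OF _ K1, of "ts w" "ts v"]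
    by (metis less_irrefl linorder_neqE)
  have "bt k w = s * bt k v + (- bt k g) * (K ^ m - 1)" using E0 by (simp add: algebra_simps)
  then have 1: "rcong k m (bt k w) (s * bt k v)"
    using rcong_zk[OF zk_uminus[OF zk_bt[OF k0, of g]], of m "s * bt k v"] unfolding K_def by simp
  obtain n where 2: "rcong k m (s * bt k v) (of_nat k ^ n * bt k v)"
    using rcong_powi[OF zk_bt[OF k0, of v] k0 m0, of "ts g"] unfolding s_def K_def by blast
  show ?thesis using tv tw rcong_trans[OF 1 2] by auto
qed

fun dg :: "nat \<Rightarrow> word \<Rightarrow> nat \<Rightarrow> int" where
  "dg m [] = (\<lambda>_. 0)"
| "dg m ((GA, b) # w) = (dg m w)(0 := dg m w 0 + (if b then 1 else -1))"
| "dg m ((GT, b) # w) = (if b then (\<lambda>i. dg m w ((i + m - 1) mod m)) else (\<lambda>i. dg m w ((i + 1) mod m)))"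

fun ac :: "word \<Rightarrow> nat" where
  "ac [] = 0"
| "ac ((GA, b) # w) = Suc (ac w)"
| "ac ((GT, b) # w) = ac w"

lemma length_ac_ts: "int (length w) \<ge> int (ac w) + \<bar>ts w\<bar>"
  by (induction w rule: ac.induct) auto

lemma sum_shift1:
  fixes m :: nat
  assumes "m > 0"
  shows "(\<Sum>i<m. g ((i + 1) mod m)) = (\<Sum>i<m. (g i :: int))"
proof -
  obtain n where n: "m = Suc n" using assms by (cases m) auto
  have "(\<Sum>i<m. g ((i + 1) mod m)) = (\<Sum>i<n. g ((i + 1) mod m)) + g ((n + 1) mod m)"
    by (simp add: n)
  also have "(\<Sum>i<n. g ((i + 1) mod m)) = (\<Sum>i<n. g (Suc i))"
    by (rule sum.cong) (auto simp: n)
  also have "g ((n + 1) mod m) = g 0" by (simp add: n)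
  also have "(\<Sum>i<n. g (Suc i)) + g 0 = (\<Sum>i<m. g i)"
    unfolding n by (subst sum.lessThan_Suc_shift) simp
  finally show ?thesis .
qed

lemma sum_shift:
  fixes m :: nat
  assumes "m > 0"
  shows "(\<Sum>i<m. g ((i + c) mod m)) = (\<Sum>i<m. (g i :: int))"
proof (induction c)
  case (Suc c)
  have "(\<Sum>i<m. g ((i + Suc c) mod m)) = (\<Sum>i<m. (\<lambda>j. g ((j + c) mod m)) ((i + 1) mod m))"
  proof (rule sum.cong)
    fix i show "g ((i + Suc c) mod m) = (\<lambda>j. g ((j + c) mod m)) ((i + 1) mod m)"
      by (simp add: mod_add_left_eq)
  qed simp
  also have "\<dots> = (\<Sum>i<m. g ((i + c) mod m))" by (rule sum_shift1[OF assms])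
  finally show ?case using Suc by simp
qed simp

definition Wt :: "nat \<Rightarrow> (nat \<Rightarrow> int) \<Rightarrow> int" where
  "Wt m f = (\<Sum>i<m. \<bar>f i\<bar>)"

lemma Wt_shift: "m > 0 \<Longrightarrow> Wt m (\<lambda>i. f ((i + c) mod m)) = Wt m f"
  unfolding Wt_def by (rule sum_shift)

lemma Wt_upd0: assumes "m > 0" "\<bar>e\<bar> \<le> 1" shows "Wt m (f(0 := f 0 + e)) \<le> Wt m f + 1"
proof -
  have "Wt m (f(0 := f 0 + e)) \<le> (\<Sum>i<m. \<bar>f i\<bar> + (if i = 0 then 1 else 0))"
    unfolding Wt_def using assms(2) by (intro sum_mono) auto
  also have "\<dots> = Wt m f + 1" using assms(1) by (simp add: Wt_def sum.distrib)
  finally show ?thesis .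
qed

lemma Wt_dg: assumes "m > 0" shows "Wt m (dg m w) \<le> int (ac w)"
proof (induction w rule: ac.induct)
  case 1 then show ?case by (simp add: Wt_def)
next
  case (2 b w)
  have e: "\<bar>(if b then 1 else -1 :: int)\<bar> \<le> 1" by simp
  have d: "dg m ((GA, b) # w) = (dg m w)(0 := dg m w 0 + (if b then 1 else -1))" by (simp only: dg.simps)
  have "int (ac ((GA, b) # w)) = int (ac w) + 1" by simp
  then show ?case unfolding d using Wt_upd0[OF assms e, of "dg m w"] 2 by linarith
next
  case (3 b w)
  have a: "Wt m (\<lambda>i. dg m w ((i + (m - 1)) mod m)) = Wt m (dg m w)" by (rule Wt_shift[OF assms])
  have b: "Wt m (\<lambda>i. dg m w ((i + 1) mod m)) = Wt m (dg m w)" by (rule Wt_shift[OF assms])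
  have c: "(\<lambda>i. dg m w ((i + m - 1) mod m)) = (\<lambda>i. dg m w ((i + (m - 1)) mod m))"
    using assms by (simp add: add_diff_assoc)
  show ?case using a b c 3 by simp
qed

lemma Vv_upd0: assumes "m > 0" shows "Vv m k (f(0 := f 0 + e)) 0 = Vv m k f 0 + e"
proof -
  obtain n where n: "m = Suc n" using assms by (cases m) auto
  have "Vv m k (f(0 := f 0 + e)) 0 = (f 0 + e) + (\<Sum>i<n. f (Suc i mod m) * k ^ Suc i)"
    unfolding Vv_def n by (subst sum.lessThan_Suc_shift) (simp add: mod_Suc)
  moreover have "Vv m k f 0 = f 0 + (\<Sum>i<n. f (Suc i mod m) * k ^ Suc i)"
    unfolding Vv_def n by (subst sum.lessThan_Suc_shift) simp
  ultimately show ?thesis by simp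
qed

lemma dg_rcong:
  assumes k0: "k > 0" and m0: "m > 0"
  shows "rcong k m (bt k w) (of_int (Vv m (int k) (dg m w) 0))"
proof (induction w rule: ac.induct)
  case 1 then show ?case by (simp add: Vv_def rcong_refl)
next
  case (2 b w)
  have d: "dg m ((GA, b) # w) = (dg m w)(0 := dg m w 0 + (if b then 1 else -1))" by (simp only: dg.simps)
  have bt: "bt k ((GA, b) # w) = bt k w + of_int (if b then 1 else -1)" by (cases b) simp_all
  have "(of_int (Vv m (int k) (dg m ((GA, b) # w)) 0) :: rat) = of_int (Vv m (int k) (dg m w) 0) + of_int (if b then 1 else -1)"
    unfolding d Vv_upd0[OF m0] by simp
  then show ?case unfolding bt by (simp only:) (rule rcong_add[OF 2])
next
  case (3 b w)
  define f where "f = dg m w"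
  show ?case
  proof (cases b)
    case True
    have "Vv m (int k) (dg m ((GT, b) # w)) 0 = Vv m (int k) f (m - 1)"
      using True m0 Vv_shift[of m "int k" f "m - 1" 0] by (simp add: f_def add_diff_assoc)
    moreover have "int k * Vv m (int k) f m = Vv m (int k) f (m - 1) + f ((m - 1) mod m) * (int k ^ m - 1)"
      using Vv_key[OF m0, of "int k" f "m - 1"] m0 by simp
    moreover have "Vv m (int k) f m = Vv m (int k) f 0" using Vv_periodic[of m "int k" f 0] by simp
    ultimately have "[int k ^ 1 * Vv m (int k) f 0 = Vv m (int k) (dg m ((GT, b) # w)) 0] (mod int k ^ m - 1)"
      by (simp add: cong_iff_dvd_diff)
    then have a: "rcong k m (of_nat k ^ 1 * of_int (Vv m (int k) f 0)) (of_int (Vv m (int k) (dg m ((GT, b) # w)) 0))"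
      using int_rcong by fastforce
    have b: "rcong k m (of_nat k ^ 1 * bt k w) (of_nat k ^ 1 * of_int (Vv m (int k) f 0))"
      using rcong_mult[OF 3[unfolded f_def[symmetric]]] by blast
    show ?thesis using rcong_trans[OF b a] True by simp
  next
    case False
    have v: "Vv m (int k) (dg m ((GT, b) # w)) 0 = Vv m (int k) f 1"
      using False Vv_shift[of m "int k" f 1 0] by (simp add: f_def)
    have key: "int k * Vv m (int k) f 1 = Vv m (int k) f 0 + f 0 * (int k ^ m - 1)"
      using Vv_key[OF m0, of "int k" f 0] by simp
    have a: "rcong k m (bt k w / of_nat k) (of_int (Vv m (int k) f 0) / of_nat k)"
      using rcong_div[OF 3[unfolded f_def[symmetric]] k0] .
    have "(of_int (Vv m (int k) f 1) :: rat) = of_int (Vv m (int k) f 0) / of_nat k + (of_int (f 0) / of_nat k) * (of_nat k ^ m - 1)"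
    proof -
      have "(of_nat k :: rat) * of_int (Vv m (int k) f 1) = of_int (Vv m (int k) f 0) + of_int (f 0) * (of_nat k ^ m - 1)"
        using arg_cong[OF key, of "of_int :: int \<Rightarrow> rat"] by simp
      then show ?thesis using k0 by (simp add: field_simps)
    qed
    then have b: "rcong k m (of_int (Vv m (int k) f 1)) (of_int (Vv m (int k) f 0) / of_nat k)"
      using rcong_zk[OF zk_divk[OF zk_int[of k "f 0"] k0], of m "of_int (Vv m (int k) f 0) / of_nat k"] by simp
    show ?thesis using rcong_trans[OF a rcong_sym[OF b]] v False by simp
  qed
qed




definition H :: "int \<Rightarrow> int \<Rightarrow> int \<Rightarrow> int" where
  "H r e x = \<bar>e\<bar> - (if (x = r \<and> e = -1) \<or> (x = - r \<and> e = 1) then 1 else 0)"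

lemma local_ineq:
  fixes r x xp e e' :: int
  assumes r1: "r \<ge> 1" and bx: "\<bar>x\<bar> \<le> r" and bxp: "\<bar>xp\<bar> \<le> r"
    and c1: "xp = r \<longrightarrow> 0 \<le> x \<and> x < r" and c2: "xp = - r \<longrightarrow> - r < x \<and> x \<le> 0"
  shows "\<bar>x + 2 * r * e' - e\<bar> - \<bar>x\<bar> \<ge> H r e' x - H r e xp"
proof -
  consider "e' \<ge> 2" | "e' \<le> -2" | "e' = -1" | "e' = 0" | "e' = 1" by linarith
  then show ?thesis
  proof cases
    case 1
    define P where "P = r * e'"
    have a: "r * 2 \<le> P" unfolding P_def using 1 r1 by (intro mult_left_mono) auto
    have b: "1 * e' \<le> P" unfolding P_def using 1 r1 by (intro mult_right_mono) auto
    have eq: "x + 2 * r * e' - e = x + 2 * P - e" unfolding P_def by simp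
    have h: "H r e' x = e'" unfolding H_def using 1 by auto
    show ?thesis unfolding eq h using assms 1 a b unfolding H_def by (auto simp: abs_if split: if_splits)
  next
    case 2
    define P where "P = r * e'"
    have a: "P \<le> r * (-2)" unfolding P_def using 2 r1 by (intro mult_left_mono) auto
    have b: "P \<le> 1 * e'" unfolding P_def using 2 r1 by (intro mult_right_mono_neg) auto
    have eq: "x + 2 * r * e' - e = x + 2 * P - e" unfolding P_def by simp
    have h: "H r e' x = - e'" unfolding H_def using 2 by auto
    show ?thesis unfolding eq h using assms 2 a b unfolding H_def by (auto simp: abs_if split: if_splits)
  qed (use assms in \<open>auto simp: H_def abs_if split: if_splits\<close>)
qed


definition good :: "int \<Rightarrow> nat \<Rightarrow> (nat \<Rightarrow> int) \<Rightarrow> bool" where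
  "good r m x \<longleftrightarrow> (\<forall>i<m. \<bar>x i\<bar> \<le> r) \<and>
     (\<forall>i<m. (x ((i + m - 1) mod m) = r \<longrightarrow> 0 \<le> x i \<and> x i < r)
          \<and> (x ((i + m - 1) mod m) = - r \<longrightarrow> - r < x i \<and> x i \<le> 0))"

lemma pred_mod: assumes "(m::nat) > 0" shows "(Suc j mod m + m - 1) mod m = j mod m"
proof (cases "Suc j mod m = 0")
  case True
  then have "j mod m = m - 1" using assms by (auto simp: mod_Suc split: if_splits)
  then show ?thesis using True assms by simp
next
  case False
  then have "Suc j mod m = Suc (j mod m)" by (auto simp: mod_Suc split: if_splits)
  then show ?thesis by simp
qed

lemma good_at:
  assumes "good r m x" "m > 0"
  shows "\<bar>x (j mod m)\<bar> \<le> r"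
    and "x (j mod m) = r \<Longrightarrow> 0 \<le> x (Suc j mod m) \<and> x (Suc j mod m) < r"
    and "x (j mod m) = - r \<Longrightarrow> - r < x (Suc j mod m) \<and> x (Suc j mod m) \<le> 0"
proof -
  show "\<bar>x (j mod m)\<bar> \<le> r" using assms unfolding good_def by simp
  have s: "Suc j mod m < m" using assms(2) by simp
  show "x (j mod m) = r \<Longrightarrow> 0 \<le> x (Suc j mod m) \<and> x (Suc j mod m) < r"
  proof -
    have "x ((Suc j mod m + m - 1) mod m) = r \<longrightarrow> 0 \<le> x (Suc j mod m) \<and> x (Suc j mod m) < r"
      using assms(1) s unfolding good_def by blast
    then show "x (j mod m) = r \<Longrightarrow> 0 \<le> x (Suc j mod m) \<and> x (Suc j mod m) < r"
      unfolding pred_mod[OF assms(2), of j] by blast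
  qed
  show "x (j mod m) = - r \<Longrightarrow> - r < x (Suc j mod m) \<and> x (Suc j mod m) \<le> 0"
  proof -
    have "x ((Suc j mod m + m - 1) mod m) = - r \<longrightarrow> - r < x (Suc j mod m) \<and> x (Suc j mod m) \<le> 0"
      using assms(1) s unfolding good_def by blast
    then show "x (j mod m) = - r \<Longrightarrow> - r < x (Suc j mod m) \<and> x (Suc j mod m) \<le> 0"
      unfolding pred_mod[OF assms(2), of j] by blast
  qed
qed

lemma carry:
  fixes k :: int
  assumes m0: "m > 0" and k2: "k \<ge> 2"
    and cg: "[Vv m k y 0 = Vv m k x 0] (mod k ^ m - 1)"
  defines "E \<equiv> \<lambda>j. Vv m k (\<lambda>i. y i - x i) j div (k ^ m - 1)"
  shows "\<And>j. k * E (Suc j) = E j + (y (j mod m) - x (j mod m))"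
    and "\<And>j. E (j + m) = E j"
proof -
  define d where "d = (\<lambda>i. y i - x i)"
  have Kpos: "k ^ m - 1 > 0"
  proof -
    have "k ^ 1 \<le> k ^ m" using m0 k2 by (intro power_increasing) auto
    then show ?thesis using k2 by simp
  qed
  have dv: "(k ^ m - 1) dvd Vv m k d j" for j
  proof -
    have "[k ^ j * Vv m k d j = Vv m k d 0] (mod k ^ m - 1)" by (rule Vv_rot[OF m0])
    moreover have "Vv m k d 0 = Vv m k y 0 - Vv m k x 0" unfolding d_def by (rule Vv_diff)
    moreover have "[Vv m k y 0 - Vv m k x 0 = 0] (mod k ^ m - 1)" using cg by (simp add: cong_iff_dvd_diff)
    ultimately have "[k ^ j * Vv m k d j = k ^ j * 0] (mod k ^ m - 1)" by (metis cong_trans mult_zero_right)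
    then have "[Vv m k d j = 0] (mod k ^ m - 1)" by (rule cong_cancel_pow[OF m0])
    then show ?thesis by (simp add: cong_0_iff)
  qed
  have Ed: "Vv m k d j = E j * (k ^ m - 1)" for j
    unfolding E_def d_def[symmetric] using dv[of j] by simp
  show "k * E (Suc j) = E j + (y (j mod m) - x (j mod m))" for j
  proof -
    have "k * Vv m k d (Suc j) = Vv m k d j + d (j mod m) * (k ^ m - 1)" by (rule Vv_key[OF m0])
    then have "(k * E (Suc j)) * (k ^ m - 1) = (E j + d (j mod m)) * (k ^ m - 1)"
      unfolding Ed by (simp add: algebra_simps)
    then show ?thesis using Kpos unfolding d_def by simp
  qed
  show "E (j + m) = E j" for j unfolding E_def by (simp add: Vv_periodic)
qed

lemma min_weight:
  fixes r :: int
  assumes r1: "r \<ge> 1" and m0: "m > 0" and gx: "good r m x"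
    and cg: "[Vv m (2 * r) y 0 = Vv m (2 * r) x 0] (mod (2 * r) ^ m - 1)"
  shows "Wt m x \<le> Wt m y"
proof -
  define E where "E = (\<lambda>j. Vv m (2 * r) (\<lambda>i. y i - x i) j div ((2 * r) ^ m - 1))"
  have k2: "2 * r \<ge> 2" using r1 by simp
  have EK: "\<And>j. 2 * r * E (Suc j) = E j + (y (j mod m) - x (j mod m))"
    and EP: "\<And>j. E (j + m) = E j"
    using carry[OF m0 k2 cg] unfolding E_def by blast+
  define F where "F = (\<lambda>j. H r (E j) (x ((j + m - 1) mod m)))"
  have loc: "\<bar>y j\<bar> - \<bar>x j\<bar> \<ge> F (Suc j) - F j" if j: "j < m" for j
  proof -
    have yj: "y j = x j + 2 * r * E (Suc j) - E j" using EK[of j] j by simp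
    have bx: "\<bar>x j\<bar> \<le> r" using gx j unfolding good_def by auto
    have bxp: "\<bar>x ((j + m - 1) mod m)\<bar> \<le> r" using gx m0 unfolding good_def by auto
    have c1: "x ((j + m - 1) mod m) = r \<longrightarrow> 0 \<le> x j \<and> x j < r"
     and c2: "x ((j + m - 1) mod m) = - r \<longrightarrow> - r < x j \<and> x j \<le> 0"
      using gx j unfolding good_def by auto
    have "(Suc j + m - 1) mod m = j" using j by simp
    then have "F (Suc j) = H r (E (Suc j)) (x j)" unfolding F_def by simp
    then show ?thesis using local_ineq[OF r1 bx bxp c1 c2, of "E (Suc j)" "E j"] yj unfolding F_def by simp
  qed
  have "(\<Sum>j<m. F (Suc j) - F j) \<le> (\<Sum>j<m. \<bar>y j\<bar> - \<bar>x j\<bar>)"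
    using loc by (intro sum_mono) auto
  moreover have "(\<Sum>j<m. F (Suc j) - F j) = F m - F 0" by (rule sum_lessThan_telescope)
  moreover have "F m = F 0"
  proof -
    have "E m = E 0" using EP[of 0] by simp
    moreover have "(m + m - 1) mod m = (0 + m - 1) mod m"
    proof -
      have "m + m - 1 = (m - 1) + m" using m0 by simp
      then show ?thesis by simp
    qed
    ultimately show ?thesis unfolding F_def by simp
  qed
  ultimately show ?thesis unfolding Wt_def by (simp add: sum_subtractf)
qed

lemma propagate:
  fixes P :: "nat \<Rightarrow> bool"
  assumes m0: "m > 0" and st: "\<And>j. P j \<Longrightarrow> P (Suc j)" and p0: "P j0" and per: "\<And>j. P (j + m) = P j"
  shows "P j"
proof -
  have a: "P (j0 + n)" for n by (induction n) (use p0 st in auto)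
  have b: "P (j + m * n) = P j" for n
    by (induction n) (simp_all, metis per add.assoc add.commute)
  have "j0 \<le> m * j0" using m0 by simp
  then have "j + m * j0 = j0 + (j + m * j0 - j0)" by linarith
  then show ?thesis using a[of "j + m * j0 - j0"] b[of j0] by simp
qed

lemma E_le1:
  fixes r :: int and E :: "nat \<Rightarrow> int"
  assumes r1: "r \<ge> 1" and m0: "m > 0" and gx: "good r m x" and gy: "good r m y"
    and EK: "\<And>j. 2 * r * E (Suc j) = E j + (y (j mod m) - x (j mod m))"
    and EP: "\<And>j. E (j + m) = E j"
  shows "E j \<le> 1"
proof (cases "\<exists>j0. E j0 \<le> 1")
  case True
  then obtain j0 where j0: "E j0 \<le> 1" by blast
  show ?thesis
  proof (rule propagate[OF m0, where P = "\<lambda>j. E j \<le> 1", OF _ j0])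
    fix j assume a: "E j \<le> 1"
    have b: "\<bar>x (j mod m)\<bar> \<le> r" "\<bar>y (j mod m)\<bar> \<le> r" using good_at(1)[OF gx m0] good_at(1)[OF gy m0] by auto
    show "E (Suc j) \<le> 1"
    proof (rule ccontr)
      assume "\<not> E (Suc j) \<le> 1"
      then have "r * 2 \<le> r * E (Suc j)" using r1 by (intro mult_left_mono) auto
      moreover have "2 * r * E (Suc j) = 2 * (r * E (Suc j))" by simp
      ultimately show False using EK[of j] a b r1 by (simp only: abs_le_iff) linarith
    qed
  next
    fix j show "(E (j + m) \<le> 1) = (E j \<le> 1)" using EP by simp
  qed
next
  case False
  have ge2: "E j \<ge> 2" for j
  proof -
    have "\<not> E j \<le> 1" using False by blast
    then show ?thesis by linarith
  qed
  define S where "S = (\<Sum>j<m. E j)"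
  define D where "D = (\<Sum>j<m. y j - x j)"
  have "(\<Sum>j<m. 2 * r * E (Suc j)) = (\<Sum>j<m. E j + (y j - x j))"
    by (rule sum.cong) (simp_all add: EK)
  then have s1: "2 * r * (\<Sum>j<m. E (Suc j)) = S + D"
    unfolding S_def D_def by (simp add: sum_distrib_left sum.distrib)
  have "(\<Sum>j<m. E (Suc j) - E j) = E m - E 0" by (rule sum_lessThan_telescope)
  moreover have "E m = E 0" using EP[of 0] by simp
  ultimately have "(\<Sum>j<m. E (Suc j)) = S" unfolding S_def by (simp add: sum_subtractf)
  then have s2: "2 * (r * S) = S + D" using s1 by (simp add: algebra_simps)
  have bd: "y j - x j \<le> 2 * r" if "j < m" for j
    using good_at(1)[OF gx m0, of j] good_at(1)[OF gy m0, of j] that by (simp add: abs_le_iff)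
  have "D \<le> (\<Sum>j<m. 2 * r)" unfolding D_def using bd by (intro sum_mono) auto
  then have Dle: "D \<le> 2 * (r * int m)" by (simp add: algebra_simps)
  have "(\<Sum>j<m. (2::int)) \<le> S" unfolding S_def using ge2 by (intro sum_mono) auto
  then have Sge: "S \<ge> 2 * int m" by simp
  have A1: "r * S \<ge> r * (2 * int m)" using Sge r1 by (intro mult_left_mono) auto
  have r1': "r = 1"
  proof (rule ccontr)
    assume "r \<noteq> 1"
    then have r2: "r \<ge> 2" using r1 by simp
    have "S \<ge> 0" using Sge by simp
    then have A2: "2 * S \<le> r * S" using r2 by (intro mult_right_mono) auto
    have B: "r * int m \<ge> 2 * int m" using r2 by (intro mult_right_mono) auto
    have "int m > 0" using m0 by simp
    then show False using s2 Dle A1 A2 B by linarith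
  qed
  then have "D = S" using s2 by simp
  then have "D = 2 * int m" using Dle Sge r1' by simp
  then have "(\<Sum>j<m. 2 - (y j - x j)) = 0" unfolding D_def by (simp add: sum_subtractf)
  moreover have "\<forall>j\<in>{..<m}. 2 - (y j - x j) \<ge> 0" using bd r1' by auto
  ultimately have "\<forall>j\<in>{..<m}. 2 - (y j - x j) = 0"
    using sum_nonneg_eq_0_iff[OF finite_lessThan[of m], of "\<lambda>j. 2 - (y j - x j)"] by simp
  then have y1: "y j = 1" if "j < m" for j
  proof -
    have "y j - x j = 2" using that \<open>\<forall>j\<in>{..<m}. 2 - (y j - x j) = 0\<close> by auto
    moreover have "\<bar>x j\<bar> \<le> 1" "\<bar>y j\<bar> \<le> 1" using that gx gy r1' unfolding good_def by auto
    ultimately show ?thesis by (simp only: abs_le_iff) linarith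
  qed
  have "y ((m - 1) mod m) = r" using y1[of "m - 1"] m0 r1' by simp
  then have "y (Suc (m - 1) mod m) < r" using good_at(2)[OF gy m0, of "m - 1"] by blast
  then show ?thesis using y1[of 0] m0 r1' by simp
qed

lemma E_struct:
  fixes r :: int and E :: "nat \<Rightarrow> int"
  assumes r1: "r \<ge> 1" and m0: "m > 0" and gx: "good r m x" and gy: "good r m y"
    and EK: "\<And>j. 2 * r * E (Suc j) = E j + (y (j mod m) - x (j mod m))"
    and EP: "\<And>j. E (j + m) = E j"
  shows "(\<forall>j. E j = 0) \<or> (\<forall>j. E j = 1) \<or> (\<forall>j. E j = -1)"
proof -
  have u: "E j \<le> 1" for j by (rule E_le1[OF r1 m0 gx gy EK EP])
  have EK': "2 * r * (- E (Suc j)) = - E j + (x (j mod m) - y (j mod m))" for j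
    using EK[of j] by (simp add: algebra_simps)
  have l: "- E j \<le> 1" for j
    using E_le1[where E = "\<lambda>j. - E j", OF r1 m0 gy gx] EK' EP by simp
  have three: "E j = -1 \<or> E j = 0 \<or> E j = 1" for j using u[of j] l[of j] by linarith
  have bnd: "\<bar>x (j mod m)\<bar> \<le> r" "\<bar>y (j mod m)\<bar> \<le> r" for j
    using good_at(1)[OF gx m0] good_at(1)[OF gy m0] by auto
  have T0: "E (Suc j) = 0" if e0: "E j = 0" for j
  proof (rule ccontr)
    assume ne: "E (Suc j) \<noteq> 0"
    have ek: "2 * r * E (Suc (Suc j)) = E (Suc j) + (y (Suc j mod m) - x (Suc j mod m))" by (rule EK)
    have ek0: "2 * r * E (Suc j) = y (j mod m) - x (j mod m)" using EK[of j] e0 by simp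
    consider "E (Suc j) = 1" | "E (Suc j) = -1" using three[of "Suc j"] ne by blast
    then show False
    proof cases
      case 1
      then have "y (j mod m) = r" "x (j mod m) = - r" using ek0 bnd[of j] by (simp_all add: abs_le_iff)
      then have a: "0 \<le> y (Suc j mod m)" "y (Suc j mod m) < r" "- r < x (Suc j mod m)" "x (Suc j mod m) \<le> 0"
        using good_at(2)[OF gy m0, of j] good_at(3)[OF gx m0, of j] by auto
      show False using three[of "Suc (Suc j)"] ek 1 a by auto
    next
      case 2
      then have "y (j mod m) = - r" "x (j mod m) = r" using ek0 bnd[of j] by (simp_all add: abs_le_iff)
      then have a: "- r < y (Suc j mod m)" "y (Suc j mod m) \<le> 0" "0 \<le> x (Suc j mod m)" "x (Suc j mod m) < r"
        using good_at(3)[OF gy m0, of j] good_at(2)[OF gx m0, of j] by auto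
      show False using three[of "Suc (Suc j)"] ek 2 a by auto
    qed
  qed
  show ?thesis
  proof (cases "\<exists>j0. E j0 = 0")
    case True
    then obtain j0 where "E j0 = 0" by blast
    have "E j = 0" for j
      proof (rule propagate[of m "\<lambda>j. E j = 0", OF m0])
        fix i assume "E i = 0" then show "E (Suc i) = 0" by (rule T0)
      next
        fix i show "(E (i + m) = 0) = (E i = 0)" using EP[of i] by simp
      qed (fact)
    then show ?thesis by blast
  next
    case False
    have T1: "E (Suc j) = 1" if "E j = 1" for j
    proof -
      have "E (Suc j) \<noteq> 0" using False by blast
      moreover have "E (Suc j) \<noteq> -1"
      proof
        assume "E (Suc j) = -1"
        then show False using EK[of j] that bnd[of j] by (simp add: abs_le_iff)
      qed
      ultimately show ?thesis using three[of "Suc j"] by blast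
    qed
    have Tm1: "E (Suc j) = -1" if "E j = -1" for j
    proof -
      have "E (Suc j) \<noteq> 0" using False by blast
      moreover have "E (Suc j) \<noteq> 1"
      proof
        assume "E (Suc j) = 1"
        then show False using EK[of j] that bnd[of j] by (simp add: abs_le_iff)
      qed
      ultimately show ?thesis using three[of "Suc j"] by blast
    qed
    consider "E 0 = 1" | "E 0 = -1" using three[of 0] False by blast
    then show ?thesis
    proof cases
      case 1
      have "E j = 1" for j
        proof (rule propagate[of m "\<lambda>j. E j = 1", OF m0])
          fix i assume "E i = 1" then show "E (Suc i) = 1" by (rule T1)
        next
          fix i show "(E (i + m) = 1) = (E i = 1)" using EP[of i] by simp
        qed (fact)
      then show ?thesis by blast
    next
      case 2
      have "E j = -1" for j
        proof (rule propagate[of m "\<lambda>j. E j = -1", OF m0])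
          fix i assume "E i = -1" then show "E (Suc i) = -1" by (rule Tm1)
        next
          fix i show "(E (i + m) = -1) = (E i = -1)" using EP[of i] by simp
        qed (fact)
      then show ?thesis by blast
    qed
  qed
qed

definition exc :: "int \<Rightarrow> nat \<Rightarrow> (nat \<Rightarrow> int) \<Rightarrow> bool" where
  "exc r m x \<longleftrightarrow> (\<forall>j. (x (j mod m) = - r \<or> x (j mod m) = 1 - r) \<and> x (Suc j mod m) \<noteq> x (j mod m))"

lemma alt_exc:
  fixes r :: int
  assumes r1: "r \<ge> 1" and m0: "m > 0" and gx: "good r m x" and gy: "good r m y"
    and d: "\<And>j. y (j mod m) - x (j mod m) = 2 * r - 1"
  shows "exc r m x"
  unfolding exc_def
proof
  fix j
  have two: "x (i mod m) = - r \<or> x (i mod m) = 1 - r" for i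
    using good_at(1)[OF gx m0, of i] good_at(1)[OF gy m0, of i] d[of i] by (auto simp: abs_le_iff)
  have "x (Suc j mod m) \<noteq> x (j mod m)"
  proof (cases "x (j mod m) = - r")
    case True
    then show ?thesis using good_at(3)[OF gx m0, of j] by auto
  next
    case False
    then have "x (j mod m) = 1 - r" using two[of j] by blast
    then have "y (j mod m) = r" using d[of j] by simp
    then have "y (Suc j mod m) < r" using good_at(2)[OF gy m0, of j] by blast
    then have "x (Suc j mod m) < 1 - r" using d[of "Suc j"] by simp
    then show ?thesis using \<open>x (j mod m) = 1 - r\<close> by simp
  qed
  then show "(x (j mod m) = - r \<or> x (j mod m) = 1 - r) \<and> x (Suc j mod m) \<noteq> x (j mod m)"
    using two[of j] by blast
qed

lemma inj_fun:
  fixes r :: int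
  assumes r1: "r \<ge> 1" and m0: "m > 0" and gx: "good r m x" and gy: "good r m y"
    and nx: "\<not> exc r m x" and ny: "\<not> exc r m y"
    and cg: "[Vv m (2 * r) y 0 = Vv m (2 * r) x 0] (mod (2 * r) ^ m - 1)"
  shows "\<forall>i<m. x i = y i"
proof -
  define E where "E = (\<lambda>j. Vv m (2 * r) (\<lambda>i. y i - x i) j div ((2 * r) ^ m - 1))"
  have k2: "2 * r \<ge> 2" using r1 by simp
  have EK: "\<And>j. 2 * r * E (Suc j) = E j + (y (j mod m) - x (j mod m))"
    and EP: "\<And>j. E (j + m) = E j"
    using carry[OF m0 k2 cg] unfolding E_def by blast+
  consider "\<forall>j. E j = 0" | "\<forall>j. E j = 1" | "\<forall>j. E j = -1"
    using E_struct[OF r1 m0 gx gy EK EP] by blast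
  then show ?thesis
  proof cases
    case 1
    show ?thesis
    proof (intro allI impI)
      fix i assume "i < m"
      then show "x i = y i" using EK[of i] 1 by simp
    qed
  next
    case 2
    have "y (j mod m) - x (j mod m) = 2 * r - 1" for j using EK[of j] 2 by simp
    then have "exc r m x" by (rule alt_exc[OF r1 m0 gx gy])
    then show ?thesis using nx by blast
  next
    case 3
    have "x (j mod m) - y (j mod m) = 2 * r - 1" for j using EK[of j] 3 by simp
    then have "exc r m y" by (rule alt_exc[OF r1 m0 gy gx])
    then show ?thesis using ny by blast
  qed
qed




lemma tword_Nil[simp]: "tword [] = []" by (simp add: tword_def)
lemma tword_Cons[simp]: "tword (x # xs) = apow x @ (GT, True) # tword xs" by (simp add: tword_def)
lemma tword_append: "tword (xs @ ys) = tword xs @ tword ys" by (simp add: tword_def)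

lemma tword_concat_rep: "tword (concat (replicate n L)) = concat (replicate n (tword L))"
  by (induction n) (simp_all add: tword_append)

lemma apow_GT: "(GT, b) \<notin> set (apow x)" by (simp add: apow_def)

lemma length_apow: "length (apow x) = nat \<bar>x\<bar>" by (simp add: apow_def)

lemma bt_apow: "bt k (apow x @ w) = bt k w + of_int x"
proof -
  have a: "bt k (replicate n (GA, True) @ w) = bt k w + of_nat n" for n by (induction n) simp_all
  have b: "bt k (replicate n (GA, False) @ w) = bt k w - of_nat n" for n by (induction n) simp_all
  show ?thesis using a[of "nat x"] b[of "nat (- x)"] by (simp add: apow_def)
qed

lemma ts_apow: "ts (apow x @ w) = ts w"
proof -
  have a: "ts (replicate n (GA, b) @ w) = ts w" for n b by (induction n) simp_all
  show ?thesis using a by (simp add: apow_def)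
qed

lemma ts_tword: "ts (tword xs) = int (length xs)"
  by (induction xs) (simp_all add: ts_apow)

fun lval :: "int \<Rightarrow> int list \<Rightarrow> int" where
  "lval k [] = 0"
| "lval k (x # xs) = x + k * lval k xs"

lemma bt_tword: "bt k (tword xs) = of_int (lval (int k) xs)"
  by (induction xs) (simp_all add: bt_apow)

lemma lval_sum: "lval k xs = (\<Sum>i<length xs. xs ! i * k ^ i)"
proof (induction xs)
  case (Cons x xs)
  show ?case by (simp add: sum.lessThan_Suc_shift Cons sum_distrib_left algebra_simps del: sum.lessThan_Suc)
qed simp

lemma lval_Vv: "length xs = m \<Longrightarrow> lval k xs = Vv m k (nth xs) 0"
  unfolding lval_sum Vv_def by (rule sum.cong) auto

lemma length_tword: "int (length (tword xs)) = int (length xs) + (\<Sum>i<length xs. \<bar>xs ! i\<bar>)"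
proof (induction xs)
  case (Cons x xs)
  show ?case by (simp add: sum.lessThan_Suc_shift Cons length_apow del: sum.lessThan_Suc)
qed simp

lemma tword_rotate1: "\<exists>n. tword (rotate1 xs) = rotate n (tword xs)"
proof (cases xs)
  case Nil then show ?thesis by auto
next
  case (Cons x ys)
  have "tword (rotate1 xs) = tword ys @ tword [x]" by (simp add: Cons tword_append)
  also have "\<dots> = rotate (length (tword [x])) (tword [x] @ tword ys)" by (rule rotate_append[symmetric])
  also have "tword [x] @ tword ys = tword xs" by (simp add: Cons tword_append[symmetric])
  finally show ?thesis by blast
qed

lemma tword_rotate: "\<exists>n. tword (rotate c xs) = rotate n (tword xs)"
proof (induction c)
  case 0 then show ?case by (rule exI[of _ 0]) simp
next
  case (Suc c)
  then obtain n where n: "tword (rotate c xs) = rotate n (tword xs)" by blast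
  obtain n' where n': "tword (rotate1 (rotate c xs)) = rotate n' (tword (rotate c xs))"
    using tword_rotate1 by blast
  have "tword (rotate (Suc c) xs) = rotate (n' + n) (tword xs)"
    by (simp add: n n' rotate_rotate)
  then show ?case by blast
qed

lemma apow_prefix:
  assumes "apow x @ (GT, True) # u = apow y @ (GT, True) # v"
  shows "x = y \<and> u = v"
proof -
  have tw: "takeWhile (\<lambda>l. fst l = GA) (apow z @ (GT, True) # w) = apow z" for z w
    by (simp add: apow_def takeWhile_append)
  have dw: "dropWhile (\<lambda>l. fst l = GA) (apow z @ (GT, True) # w) = (GT, True) # w" for z w
    by (simp add: apow_def dropWhile_append)
  have "apow x = apow y" using tw[of x u] tw[of y v] assms by metis
  moreover have "u = v" using dw[of x u] dw[of y v] assms by simp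
  moreover have "apow x = apow y \<Longrightarrow> x = y"
    by (auto simp: apow_def split: if_splits)
  ultimately show ?thesis by blast
qed

lemma tword_inj: "tword xs = tword ys \<Longrightarrow> xs = ys"
proof (induction xs arbitrary: ys)
  case Nil then show ?case by (cases ys) auto
next
  case (Cons x xs)
  then show ?case using apow_prefix by (cases ys) auto
qed

lemma nth_concat_rep2: "i < 2 * n \<Longrightarrow> concat (replicate n [a, b]) ! i = (if even i then a else b)"
proof (induction n arbitrary: i)
  case (Suc n)
  show ?case
  proof (cases i)
    case 0 then show ?thesis by simp
  next
    case (Suc i')
    show ?thesis
    proof (cases i')
      case 0 then show ?thesis using Suc by simp
    next
      case (Suc i'')
      then show ?thesis using \<open>i = Suc i'\<close> Suc.IH[of i''] Suc.prems by simp
    qed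
  qed
qed simp

lemma length_concat_rep2: "length (concat (replicate n [a, b])) = 2 * n"
  by (induction n) simp_all




lemma good_cong:
  assumes "m > 0" "\<forall>i<m. x i = y i" "good r m x" shows "good r m y"
proof -
  have p: "(i + m - 1) mod m < m" for i using assms(1) by simp
  show ?thesis using assms(2,3) p unfolding good_def by auto
qed

lemma exc_cong:
  assumes "m > 0" "\<forall>i<m. x i = y i" "exc r m x" shows "exc r m y"
proof -
  have p: "j mod m < m" for j using assms(1) by simp
  show ?thesis using assms(2,3) p unfolding exc_def by metis
qed

lemma good_shift:
  assumes m0: "m > 0" and g: "good r m x" shows "good r m (\<lambda>i. x ((i + c) mod m))"
proof -
  have e: "((i + m - 1) mod m + c) mod m = ((i + c) mod m + m - 1) mod m" for i
  proof -
    have "((i + m - 1) mod m + c) mod m = (i + m - 1 + c) mod m" by (simp add: mod_add_left_eq)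
    also have "i + m - 1 + c = (i + c) + (m - 1)" using m0 by simp
    also have "((i + c) + (m - 1)) mod m = ((i + c) mod m + (m - 1)) mod m" by (simp add: mod_add_left_eq)
    also have "(i + c) mod m + (m - 1) = (i + c) mod m + m - 1" using m0 by simp
    finally show ?thesis .
  qed
  have A: "\<forall>i<m. \<bar>x ((i + c) mod m)\<bar> \<le> r" using g m0 unfolding good_def by simp
  have B: "\<forall>i<m. (x (((i + m - 1) mod m + c) mod m) = r \<longrightarrow> 0 \<le> x ((i + c) mod m) \<and> x ((i + c) mod m) < r)
     \<and> (x (((i + m - 1) mod m + c) mod m) = - r \<longrightarrow> - r < x ((i + c) mod m) \<and> x ((i + c) mod m) \<le> 0)"
  proof (intro allI impI)
    fix i assume i: "i < m"
    have ic: "(i + c) mod m < m" using m0 by simp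
    show "(x (((i + m - 1) mod m + c) mod m) = r \<longrightarrow> 0 \<le> x ((i + c) mod m) \<and> x ((i + c) mod m) < r)
     \<and> (x (((i + m - 1) mod m + c) mod m) = - r \<longrightarrow> - r < x ((i + c) mod m) \<and> x ((i + c) mod m) \<le> 0)"
      using g ic unfolding good_def e by blast
  qed
  show ?thesis unfolding good_def using A B by simp
qed

lemma exc_shift:
  assumes m0: "m > 0" and ex: "exc r m (\<lambda>i. x ((i + c) mod m))" shows "exc r m x"
  unfolding exc_def
proof
  fix j
  define j' where "j' = j + (m - c mod m)"
  have cm: "c mod m < m" using m0 by simp
  have "j' + c = j + m * Suc (c div m)"
  proof -
    have ceq: "c = c mod m + m * (c div m)" by simp
    have "m * Suc (c div m) = m + m * (c div m)" by simp
    then show ?thesis unfolding j'_def using cm ceq by linarith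
  qed
  then have a: "(j' + c) mod m = j mod m" by (metis mod_mult_self2)
  have b: "(Suc j' + c) mod m = Suc j mod m"
  proof -
    have "(Suc j' + c) mod m = Suc ((j' + c) mod m) mod m" by (simp add: mod_Suc_eq)
    also have "\<dots> = Suc (j mod m) mod m" using a by simp
    finally show ?thesis by (simp add: mod_Suc_eq)
  qed
  have "(x ((j' mod m + c) mod m) = - r \<or> x ((j' mod m + c) mod m) = 1 - r) \<and>
        x ((Suc j' mod m + c) mod m) \<noteq> x ((j' mod m + c) mod m)"
    using ex unfolding exc_def by blast
  moreover have "(j' mod m + c) mod m = j mod m" using a by (simp add: mod_add_left_eq)
  moreover have "(Suc j' mod m + c) mod m = Suc j mod m" using b by (simp add: mod_add_left_eq)
  ultimately show "(x (j mod m) = - r \<or> x (j mod m) = 1 - r) \<and> x (Suc j mod m) \<noteq> x (j mod m)"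
    by simp
qed

lemma exc_forms:
  assumes m0: "m > 0" and len: "length xs = m" and ex: "exc r m (nth xs)"
  shows "xs = concat (replicate (m div 2) [1 - r, - r]) \<or> xs = concat (replicate (m div 2) [- r, 1 - r])"
proof -
  define P where "P = (\<lambda>j. xs ! (j mod m) = - r)"
  have st: "P (Suc j) = (\<not> P j)" for j
    using ex unfolding exc_def P_def by (metis add.commute add_left_cancel diff_add_cancel)
  have pn: "P n = (P 0 = even n)" for n by (induction n) (simp_all add: st)
  have "P m = P 0" unfolding P_def by simp
  then have ev: "even m" using pn[of m] by auto
  have two: "xs ! i = - r \<or> xs ! i = 1 - r" if "i < m" for i
    using ex that unfolding exc_def by (metis mod_less)
  have L: "length (concat (replicate (m div 2) [a, b])) = m" for a b :: int
    using ev by (simp add: length_concat_rep2)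
  show ?thesis
  proof (cases "P 0")
    case True
    have "xs = concat (replicate (m div 2) [- r, 1 - r])"
    proof (rule nth_equalityI)
      show "length xs = length (concat (replicate (m div 2) [- r, 1 - r]))" using L len by simp
    next
      fix i assume "i < length xs"
      then have i: "i < m" using len by simp
      have "P i = even i" using pn[of i] True by simp
      then show "xs ! i = concat (replicate (m div 2) [- r, 1 - r]) ! i"
        using two[OF i] i ev unfolding P_def by (auto simp: nth_concat_rep2)
    qed
    then show ?thesis by blast
  next
    case False
    have "xs = concat (replicate (m div 2) [1 - r, - r])"
    proof (rule nth_equalityI)
      show "length xs = length (concat (replicate (m div 2) [1 - r, - r]))" using L len by simp
    next
      fix i assume "i < length xs"
      then have i: "i < m" using len by simp
      have "P i = odd i" using pn[of i] False by simp
      then show "xs ! i = concat (replicate (m div 2) [1 - r, - r]) ! i"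
        using two[OF i] i ev unfolding P_def by (auto simp: nth_concat_rep2)
    qed
    then show ?thesis by blast
  qed
qed

lemma A_unpack:
  assumes "w \<in> A_set r m" "m > 0"
  shows "\<exists>xs. length xs = m \<and> w = tword xs \<and> good (int r) m (nth xs) \<and> \<not> exc (int r) m (nth xs)"
proof -
  obtain xs where len: "length xs = m" and w: "w = tword xs"
    and c1: "\<forall>i<m. \<bar>xs ! i\<bar> \<le> int r"
    and c2: "\<forall>i<m. (xs ! ((i + m - 1) mod m) = int r \<longrightarrow> 0 \<le> xs ! i \<and> xs ! i < int r)
              \<and> (xs ! ((i + m - 1) mod m) = - int r \<longrightarrow> - int r < xs ! i \<and> xs ! i \<le> 0)"
    and c3: "even m \<longrightarrow>
           w \<noteq> concat (replicate (m div 2) (tword [- (int r - 1), - int r]))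
         \<and> w \<noteq> concat (replicate (m div 2) (tword [- int r, - (int r - 1)]))"
    using assms(1) unfolding A_set_def by blast
  have g: "good (int r) m (nth xs)" unfolding good_def using c1 c2 by blast
  have ne: "\<not> exc (int r) m (nth xs)"
  proof
    assume ex: "exc (int r) m (nth xs)"
    define P where "P = (\<lambda>j. xs ! (j mod m) = - int r)"
    have st: "P (Suc j) = (\<not> P j)" for j
      using ex unfolding exc_def P_def by (metis add.commute add_left_cancel diff_add_cancel)
    have pn: "P n = (P 0 = even n)" for n by (induction n) (simp_all add: st)
    have "P m = P 0" unfolding P_def by simp
    then have ev: "even m" using pn[of m] by auto
    have e: "- (int r - 1) = 1 - int r" by simp
    show False using exc_forms[OF assms(2) len ex] c3 ev w unfolding e by (auto simp: tword_concat_rep)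
  qed
  show ?thesis using len w g ne by blast
qed




lemma bs_conj_refl: "bs_conj k u u"
  unfolding bs_conj_def by (rule exI[of _ "[]"]) (simp add: inv_word_def bs_refl)

lemma inv_word_append: "inv_word (a @ b) = inv_word b @ inv_word a"
  by (simp add: inv_word_def)

lemma bs_conj_trans: assumes "bs_conj k u v" "bs_conj k v w" shows "bs_conj k u w"
proof -
  obtain g1 where 1: "bs_eq k (g1 @ u @ inv_word g1) v" using assms(1) unfolding bs_conj_def by blast
  obtain g2 where 2: "bs_eq k (g2 @ v @ inv_word g2) w" using assms(2) unfolding bs_conj_def by blast
  have "bs_eq k (g2 @ (g1 @ u @ inv_word g1) @ inv_word g2) (g2 @ v @ inv_word g2)"
    by (rule bs_ctxt[OF 1])
  then have "bs_eq k ((g2 @ g1) @ u @ inv_word (g2 @ g1)) w"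
    using bs_trans 2 by (simp add: inv_word_append)
  then show ?thesis unfolding bs_conj_def by blast
qed

lemma bs_conj_rotate1: "bs_conj k u (rotate1 u)"
proof (cases u)
  case Nil then show ?thesis by (simp add: bs_conj_refl)
next
  case (Cons l u')
  have il: "inv_letter (inv_letter l) = l" by (simp add: inv_letter_def)
  have "bs_eq k ([] @ [inv_letter l, inv_letter (inv_letter l)] @ (u' @ [l])) ([] @ [] @ (u' @ [l]))"
    by (rule bs_ctxt[OF bs_free])
  then have "bs_eq k ([inv_letter l] @ u @ inv_word [inv_letter l]) (rotate1 u)"
    using il by (simp add: Cons inv_word_def)
  then show ?thesis unfolding bs_conj_def by blast
qed

lemma bs_conj_rotate: "bs_conj k u (rotate n u)"
proof (induction n)
  case 0 then show ?case by (simp add: bs_conj_refl)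
next
  case (Suc n)
  then show ?case using bs_conj_trans[OF Suc bs_conj_rotate1[of k "rotate n u"]] by simp
qed

lemma conj_ev:
  assumes "bs_conj k u v" "k > 0"
  shows "\<exists>g. \<forall>z. ev k v (ev k g z) = ev k g (ev k u z)"
proof -
  obtain g where 1: "bs_eq k (g @ u @ inv_word g) v" using assms(1) unfolding bs_conj_def by blast
  have e: "ev k v = ev k (g @ u @ inv_word g)" using bs_eq_ev[OF 1 assms(2)] by simp
  have "ev k v (ev k g z) = ev k g (ev k u z)" for z
    unfolding e ev_append ev_inv_word[OF assms(2)] by simp
  then show ?thesis by blast
qed

lemma cong_to_shift:
  fixes r :: nat
  assumes r1: "r \<ge> 1" and m0: "m > 0" and k: "k = 2 * r"
    and tw: "ts w = int m" and cj: "\<forall>z. ev k w (ev k g z) = ev k g (ev k v z)"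
    and bv: "rcong k m (bt k v) (of_int (Vv m (int k) f 0))"
    and bw: "bt k w = of_int B"
  shows "ts v = int m \<and> (\<exists>c. [Vv m (2 * int r) (\<lambda>i. f ((i + c) mod m)) 0 = B] (mod (2 * int r) ^ m - 1))"
proof -
  have k1: "k > 1" using r1 k by simp
  obtain n where tv: "ts v = int m" and 1: "rcong k m (bt k w) (of_nat k ^ n * bt k v)"
    using conj_affine[OF k1 m0 tw cj] by blast
  have 2: "rcong k m (of_nat k ^ n * bt k v) (of_nat k ^ n * of_int (Vv m (int k) f 0))"
    by (rule rcong_mult[OF bv])
  have "rcong k m (of_int B) (of_int (int k ^ n * Vv m (int k) f 0))"
    using rcong_trans[OF 1 2] bw by simp
  then have 3: "[B = int k ^ n * Vv m (int k) f 0] (mod int k ^ m - 1)" by (rule rcong_int[OF _ m0])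
  have 4: "[int k ^ n * Vv m (int k) f 0 = Vv m (int k) f ((m - 1) * n)] (mod int k ^ m - 1)"
    by (rule Vv_pow_shift[OF m0])
  have 5: "Vv m (int k) (\<lambda>i. f ((i + (m - 1) * n) mod m)) 0 = Vv m (int k) f ((m - 1) * n)"
    using Vv_shift[of m "int k" f "(m - 1) * n" 0] by simp
  have "[Vv m (int k) (\<lambda>i. f ((i + (m - 1) * n) mod m)) 0 = B] (mod int k ^ m - 1)"
    unfolding 5 using cong_sym[OF cong_trans[OF 3 4]] .
  then show ?thesis using tv k by auto
qed

lemma geo_bound:
  fixes r :: nat
  assumes r1: "r \<ge> 1" and m0: "m > 0" and k: "k = 2 * r"
    and len: "length xs = m" and gx: "good (int r) m (nth xs)"
    and cj: "\<forall>z. ev k (tword xs) (ev k g z) = ev k g (ev k v z)"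
  shows "length (tword xs) \<le> length v"
proof -
  have k0: "k > 0" using r1 k by simp
  have tw: "ts (tword xs) = int m" using len by (simp add: ts_tword)
  have bw: "bt k (tword xs) = of_int (Vv m (int k) (nth xs) 0)" by (simp add: bt_tword lval_Vv[OF len])
  obtain c where tv: "ts v = int m"
    and cg: "[Vv m (2 * int r) (\<lambda>i. dg m v ((i + c) mod m)) 0 = Vv m (int k) (nth xs) 0] (mod (2 * int r) ^ m - 1)"
    using cong_to_shift[OF r1 m0 k tw cj dg_rcong[OF k0 m0] bw] by blast
  have ir: "int r \<ge> 1" using r1 by simp
  have "Wt m (nth xs) \<le> Wt m (\<lambda>i. dg m v ((i + c) mod m))"
    by (rule min_weight[OF ir m0 gx]) (use cg k in simp)
  also have "\<dots> = Wt m (dg m v)" by (rule Wt_shift[OF m0])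
  also have "\<dots> \<le> int (ac v)" by (rule Wt_dg[OF m0])
  finally have W: "Wt m (nth xs) \<le> int (ac v)" .
  have "int (length (tword xs)) = int m + Wt m (nth xs)" using length_tword[of xs] len by (simp add: Wt_def)
  then show ?thesis using W length_ac_ts[of v] tv by linarith
qed

theorem lemma4p5:
  fixes r m k :: nat
  assumes "r \<ge> 1" and "k = 2 * r" and "m > 0"
  shows "(\<forall>u \<in> A_set r m. \<forall>v \<in> A_set r m. bs_conj k u v \<longleftrightarrow> (\<exists>n. v = rotate n u))
       \<and> (\<forall>w \<in> A_set r m. bs_conj_geodesic k w)"
proof
  note r1 = assms(1) and k = assms(2) and m0 = assms(3)
  have k0: "k > 0" using r1 k by simp
  have ir: "int r \<ge> 1" using r1 by simp
  show "\<forall>u \<in> A_set r m. \<forall>v \<in> A_set r m. bs_conj k u v \<longleftrightarrow> (\<exists>n. v = rotate n u)"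
  proof (intro ballI iffI)
    fix u v assume "u \<in> A_set r m" "v \<in> A_set r m" "\<exists>n. v = rotate n u"
    then show "bs_conj k u v" using bs_conj_rotate by blast
  next
    fix u v assume uA: "u \<in> A_set r m" and vA: "v \<in> A_set r m" and cj: "bs_conj k u v"
    obtain xs where lx: "length xs = m" and u: "u = tword xs" and gx: "good (int r) m (nth xs)"
      and nx: "\<not> exc (int r) m (nth xs)" using A_unpack[OF uA m0] by blast
    obtain ys where ly: "length ys = m" and v: "v = tword ys" and gy: "good (int r) m (nth ys)"
      and ny: "\<not> exc (int r) m (nth ys)" using A_unpack[OF vA m0] by blast
    obtain g where cg: "\<forall>z. ev k v (ev k g z) = ev k g (ev k u z)" using conj_ev[OF cj k0] by blast
    have tv: "ts v = int m" using ly v by (simp add: ts_tword)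
    have bu: "rcong k m (bt k u) (of_int (Vv m (int k) (nth xs) 0))"
      by (simp add: u bt_tword lval_Vv[OF lx] rcong_refl)
    have bv: "bt k v = of_int (Vv m (int k) (nth ys) 0)" by (simp add: v bt_tword lval_Vv[OF ly])
    obtain c where cc: "[Vv m (2 * int r) (\<lambda>i. xs ! ((i + c) mod m)) 0 = Vv m (int k) (nth ys) 0] (mod (2 * int r) ^ m - 1)"
      using cong_to_shift[OF r1 m0 k tv cg bu bv] by blast
    define x' where "x' = (\<lambda>i. xs ! ((i + c) mod m))"
    have gx': "good (int r) m x'" unfolding x'_def by (rule good_shift[OF m0 gx])
    have nx': "\<not> exc (int r) m x'" using exc_shift[OF m0, of "int r" "nth xs" c] nx unfolding x'_def by blast
    have "\<forall>i<m. x' i = ys ! i"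
      by (rule inj_fun[OF ir m0 gx' gy nx' ny]) (use cc k in \<open>simp add: x'_def cong_sym_eq\<close>)
    then have "ys = rotate c xs"
      by (intro nth_equalityI) (simp_all add: lx ly nth_rotate x'_def add.commute)
    then obtain n where "v = rotate n u" using tword_rotate[of c xs] u v by metis
    then show "\<exists>n. v = rotate n u" by blast
  qed
  show "\<forall>w \<in> A_set r m. bs_conj_geodesic k w"
  proof
    fix w assume wA: "w \<in> A_set r m"
    obtain xs where lx: "length xs = m" and w: "w = tword xs" and gx: "good (int r) m (nth xs)"
      using A_unpack[OF wA m0] by blast
    have lb: "length w \<le> length v" if cvw: "bs_conj k v w" for v
    proof -
      obtain g where "\<forall>z. ev k w (ev k g z) = ev k g (ev k v z)" using conj_ev[OF cvw k0] by blast
      then show ?thesis using geo_bound[OF r1 m0 k lx gx] w by blast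
    qed
    have eqc: "bs_conj k v w" if "bs_eq k v w" for v
      using that unfolding bs_conj_def by (intro exI[of _ "[]"]) (simp add: inv_word_def)
    have bl: "bs_length k w = length w"
      unfolding bs_length_def
    proof (rule Least_equality)
      show "\<exists>v. bs_eq k v w \<and> length v = length w" using bs_refl by blast
    next
      fix n assume "\<exists>v. bs_eq k v w \<and> length v = n"
      then show "length w \<le> n" using lb eqc by blast
    qed
    have "bs_length k w \<le> bs_length k v" if cv: "bs_conj k v w" for v
    proof -
      have "\<exists>v'. bs_eq k v' v \<and> length v' = bs_length k v"
        unfolding bs_length_def by (rule LeastI_ex) (use bs_refl in blast)
      then obtain v' where v': "bs_eq k v' v" "length v' = bs_length k v" by blast
      have "bs_conj k v' v" using v'(1) unfolding bs_conj_def by (intro exI[of _ "[]"]) (simp add: inv_word_def)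
      then have "bs_conj k v' w" using bs_conj_trans cv by blast
      then have "length w \<le> length v'" by (rule lb)
      then show ?thesis using bl v'(2) by simp
    qed
    then show "bs_conj_geodesic k w" unfolding bs_conj_geodesic_def bs_geodesic_def using bl by simp
  qed
qed


end
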